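(* Let $j\ge2$, let $H$ be a graph, and let $G\cong\mathsf{TS}_j(H)$. Write $q=\omega(G)$ and, for a graph $X$ and integer $t$, let $c_t(X)$ be the number of $t$-cliques of $X$. If $q\ge j+2$, then \[ c_q(G)=\binom{q+j-1}{j-1}\,c_{q+j-1}(H); \] in particular $\binom{q+j-1}{j-1}$ divides $c_q(G)$.
   Context: All graphs are finite, simple, undirected; $\omega(G)$ is the clique number. A $k$-clique of a graph $H$ is a set of $k$ pairwise adjacent vertices. For a graph $H$ and integer $k\ge1$, the Token Sliding graph $\mathsf{TS}_k(H)$ has as vertices the $k$-cliques of $H$, and two $k$-cliques $A,B$ are adjacent iff $A\setminus B=\{u\}$, $B\setminus A=\{v\}$ for some vertices $u,v$ with $uv\in E(H)$. *)

theory Defs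
  imports Main
begin

definition simple_graph :: "'a set \<Rightarrow> ('a \<Rightarrow> 'a \<Rightarrow> bool) \<Rightarrow> bool" where
  "simple_graph V E \<longleftrightarrow> finite V \<and> (\<forall>u v. E u v \<longrightarrow> u \<in> V \<and> v \<in> V)
     \<and> (\<forall>u v. E u v \<longrightarrow> E v u) \<and> (\<forall>u. \<not> E u u)"

definition is_clique :: "'a set \<Rightarrow> ('a \<Rightarrow> 'a \<Rightarrow> bool) \<Rightarrow> 'a set \<Rightarrow> bool" where
  "is_clique V E K \<longleftrightarrow> K \<subseteq> V \<and> (\<forall>u\<in>K. \<forall>v\<in>K. u \<noteq> v \<longrightarrow> E u v)"

definition cliques :: "'a set \<Rightarrow> ('a \<Rightarrow> 'a \<Rightarrow> bool) \<Rightarrow> nat \<Rightarrow> 'a set set" where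
  "cliques V E k = {K. is_clique V E K \<and> card K = k}"

text \<open>Clique number (the empty set is a clique, so the set is nonempty).\<close>
definition clique_number :: "'a set \<Rightarrow> ('a \<Rightarrow> 'a \<Rightarrow> bool) \<Rightarrow> nat" where
  "clique_number V E = Max {card K | K. is_clique V E K}"

definition TS_vertices :: "'a set \<Rightarrow> ('a \<Rightarrow> 'a \<Rightarrow> bool) \<Rightarrow> nat \<Rightarrow> 'a set set" where
  "TS_vertices V E k = cliques V E k"

definition TS_edge :: "'a set \<Rightarrow> ('a \<Rightarrow> 'a \<Rightarrow> bool) \<Rightarrow> nat \<Rightarrow> 'a set \<Rightarrow> 'a set \<Rightarrow> bool" where
  "TS_edge V E k A B \<longleftrightarrow> A \<in> cliques V E k \<and> B \<in> cliques V E k \<and>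
     (\<exists>u v. A - B = {u} \<and> B - A = {v} \<and> E u v)"

definition graph_iso :: "'a set \<Rightarrow> ('a \<Rightarrow> 'a \<Rightarrow> bool) \<Rightarrow> 'b set \<Rightarrow> ('b \<Rightarrow> 'b \<Rightarrow> bool) \<Rightarrow> bool" where
  "graph_iso V1 E1 V2 E2 \<longleftrightarrow> (\<exists>f. bij_betw f V1 V2 \<and>
     (\<forall>u\<in>V1. \<forall>v\<in>V1. E1 u v \<longleftrightarrow> E2 (f u) (f v)))"

end

theory Submission imports Defs begin

lemma cliques_subset_Pow: "cliques V E k \<subseteq> Pow V"
  by (auto simp: cliques_def is_clique_def)

lemma iso_card_le:
  assumes bij: "bij_betw f V1 V2" and e: "\<forall>u\<in>V1. \<forall>v\<in>V1. E1 u v \<longleftrightarrow> E2 (f u) (f v)"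
    and fin: "finite V2"
  shows "card (cliques V1 E1 k) \<le> card (cliques V2 E2 k)"
proof (rule card_inj_on_le[where f="image f"])
  have inj: "inj_on f V1" using bij bij_betw_def by blast
  show "inj_on (image f) (cliques V1 E1 k)"
  proof (rule inj_onI)
    fix A B assume "A \<in> cliques V1 E1 k" "B \<in> cliques V1 E1 k" "f ` A = f ` B"
    moreover have "A \<subseteq> V1" "B \<subseteq> V1" using calculation unfolding cliques_def is_clique_def by auto
    ultimately show "A = B" using inj_on_image_eq_iff[OF inj] by simp
  qed
  show "image f ` cliques V1 E1 k \<subseteq> cliques V2 E2 k"
  proof
    fix L assume "L \<in> image f ` cliques V1 E1 k"
    then obtain K where K: "K \<in> cliques V1 E1 k" "L = f ` K" by blast
    have KV: "K \<subseteq> V1" and Kc: "\<forall>u\<in>K. \<forall>v\<in>K. u \<noteq> v \<longrightarrow> E1 u v" and ck: "card K = k"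
      using K by (auto simp: cliques_def is_clique_def)
    have "f ` K \<subseteq> V2" using KV bij bij_betw_imp_surj_on by blast
    moreover have "\<forall>u\<in>f`K. \<forall>v\<in>f`K. u \<noteq> v \<longrightarrow> E2 u v"
    proof (intro ballI impI)
      fix u v assume "u \<in> f ` K" "v \<in> f ` K" "u \<noteq> v"
      then obtain x y where "x \<in> K" "y \<in> K" "u = f x" "v = f y" "x \<noteq> y" by blast
      then have xy: "x \<in> K" "y \<in> K" "u = f x" "v = f y" "x \<noteq> y" .
      have "E1 x y" using Kc xy by blast
      moreover have "x \<in> V1" "y \<in> V1" using KV xy by auto
      ultimately show "E2 u v" using e xy by simp
    qed
    moreover have "card (f ` K) = k" using ck card_image[OF inj_on_subset[OF inj KV]] by simp
    ultimately show "L \<in> cliques V2 E2 k" unfolding K(2) cliques_def is_clique_def by blast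
  qed
  show "finite (cliques V2 E2 k)" by (rule finite_subset[OF cliques_subset_Pow]) (simp add: fin)
qed

lemma iso_card_eq:
  assumes "graph_iso V1 E1 V2 E2" "finite V1" "finite V2"
  shows "card (cliques V1 E1 k) = card (cliques V2 E2 k)"
proof -
  obtain f where bij: "bij_betw f V1 V2" and e: "\<forall>u\<in>V1. \<forall>v\<in>V1. E1 u v \<longleftrightarrow> E2 (f u) (f v)"
    using assms(1) unfolding graph_iso_def by blast
  define g where "g = inv_into V1 f"
  have bg: "bij_betw g V2 V1" using bij bij_betw_inv_into g_def by blast
  have eg: "\<forall>u\<in>V2. \<forall>v\<in>V2. E2 u v \<longleftrightarrow> E1 (g u) (g v)"
  proof (intro ballI)
    fix u v assume "u \<in> V2" "v \<in> V2"
    have im: "f ` V1 = V2" using bij bij_betw_imp_surj_on by blast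
    have fu: "f (g u) = u" unfolding g_def by (rule f_inv_into_f) (simp add: im \<open>u \<in> V2\<close>)
    have fv: "f (g v) = v" unfolding g_def by (rule f_inv_into_f) (simp add: im \<open>v \<in> V2\<close>)
    have gu: "g u \<in> V1" by (rule bij_betw_apply[OF bg \<open>u \<in> V2\<close>])
    have gv: "g v \<in> V1" by (rule bij_betw_apply[OF bg \<open>v \<in> V2\<close>])
    show "E2 u v \<longleftrightarrow> E1 (g u) (g v)" using e gu gv fu fv by simp
  qed
  show ?thesis using iso_card_le[OF bij e assms(3), of k] iso_card_le[OF bg eg assms(2), of k] by (rule le_antisym)
qed


lemma card_eq_from_sub:
  assumes "finite C" "T \<subseteq> C" "card T = card C" shows "T = C"
  using assms card_subset_eq by blast

lemma sunflower:
  fixes F :: "'a set set"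
  assumes fin: "finite F" and cF: "card F \<ge> j + 2" and j: "j \<ge> 1"
    and cards: "\<And>A. A \<in> F \<Longrightarrow> finite A \<and> card A = j"
    and inter: "\<And>A B. A \<in> F \<Longrightarrow> B \<in> F \<Longrightarrow> A \<noteq> B \<Longrightarrow> card (A \<inter> B) = j - 1"
  shows "\<exists>S. card S = j - 1 \<and> (\<forall>A\<in>F. S \<subseteq> A)"
proof -
  have "card F \<ge> 2" using cF by simp
  then have "F \<noteq> {}" by auto
  then obtain A where AF: "A \<in> F" by blast
  have "card (F - {A}) \<ge> 1" using \<open>card F \<ge> 2\<close> AF fin by auto
  then have "F - {A} \<noteq> {}" by (metis card.empty not_one_le_zero)
  then obtain B where BF: "B \<in> F" and AB: "A \<noteq> B" by blast
  define S where "S = A \<inter> B"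
  have fA: "finite A" "card A = j" and fB: "finite B" "card B = j" using cards AF BF by auto
  have cS: "card S = j - 1" using inter AF BF AB S_def by simp
  have fS: "finite S" using S_def fA by simp
  have SA: "S \<subseteq> A" and SB: "S \<subseteq> B" by (auto simp: S_def)
  have "card (A - S) = card A - card S" using card_Diff_subset[OF fS SA] .
  then have "card (A - S) = 1" using fA cS j by simp
  then obtain a where a: "A - S = {a}" by (auto simp: card_1_singleton_iff)
  have "card (B - S) = card B - card S" using card_Diff_subset[OF fS SB] .
  then have "card (B - S) = 1" using fB cS j by simp
  then obtain b where b: "B - S = {b}" by (auto simp: card_1_singleton_iff)
  have Aeq: "A = insert a S" and aS: "a \<notin> S" using a S_def by auto
  have Beq: "B = insert b S" and bS: "b \<notin> S" using b S_def by auto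
  have ab: "a \<noteq> b" using Aeq Beq AB by auto
  have aB: "a \<notin> B" using a unfolding S_def by blast
  have bA: "b \<notin> A" using b unfolding S_def by blast
  have outside: "C = insert a (insert b (S - {s}))"
    if CF: "C \<in> F" and sS: "s \<in> S" and sC: "s \<notin> C" for C s
  proof -
    have fC: "finite C" "card C = j" using cards CF by auto
    have CA: "C \<noteq> A" using sS sC S_def by auto
    have CB: "C \<noteq> B" using sS sC S_def by auto
    have c1: "card (C \<inter> A) = j - 1" using inter CF AF CA by simp
    have c2: "card (C \<inter> B) = j - 1" using inter CF BF CB by simp
    have cAs: "card (A - {s}) = j - 1" using fA sS S_def by auto
    have cBs: "card (B - {s}) = j - 1" using fB sS S_def by auto
    have e1: "C \<inter> A = A - {s}"
      by (rule card_eq_from_sub) (use fA c1 cAs sC in auto)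
    have e2: "C \<inter> B = B - {s}"
      by (rule card_eq_from_sub) (use fB c2 cBs sC in auto)
    have sub: "insert a (insert b (S - {s})) \<subseteq> C"
      using e1 e2 Aeq Beq aS bS sS by blast
    have "card (insert a (insert b (S - {s}))) = j"
    proof -
      have "card (S - {s}) = j - 2" using cS sS fS by auto
      moreover have "card S \<ge> 1" using sS fS card_0_eq by fastforce
      ultimately show ?thesis using fS aS bS ab cS by auto
    qed
    then show ?thesis using card_eq_from_sub[OF fC(1) sub] fC by simp
  qed
  have allS: "\<forall>C\<in>F. S \<subseteq> C"
  proof (rule ccontr)
    assume "\<not> (\<forall>C\<in>F. S \<subseteq> C)"
    then obtain D s where DF: "D \<in> F" and sS: "s \<in> S" and sD: "s \<notin> D" by blast
    have Deq: "D = insert a (insert b (S - {s}))" using outside DF sS sD by blast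
    have j2: "j \<ge> 2" using sS fS cS card_0_eq by fastforce
    have sub: "F \<subseteq> {C. C \<subseteq> insert a (insert b S) \<and> card C = j}"
    proof
      fix C assume CF: "C \<in> F"
      have fC: "finite C" "card C = j" using cards CF by auto
      have "C \<subseteq> insert a (insert b S)"
      proof (cases "S \<subseteq> C")
        case False
        then obtain s' where "s' \<in> S" "s' \<notin> C" by blast
        then show ?thesis using outside[OF CF] by blast
      next
        case True
        have "card (C - S) = card C - card S" using card_Diff_subset[OF fS True] .
        then have "card (C - S) = 1" using fC cS j by simp
        then obtain c where c: "C - S = {c}" by (auto simp: card_1_singleton_iff)
        have Ceq: "C = insert c S" and cS': "c \<notin> S" using c True by auto
        show ?thesis
        proof (rule ccontr)
          assume nsub: "\<not> C \<subseteq> insert a (insert b S)"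
          then have ca: "c \<noteq> a" "c \<noteq> b" using Ceq by auto
          have CD: "C \<noteq> D" using sS sD Ceq by auto
          have "C \<inter> D = S - {s}" using Ceq Deq ca cS' aS bS by auto
          then have "card (C \<inter> D) = j - 2" using cS sS fS by auto
          moreover have "card (C \<inter> D) = j - 1" using inter CF DF CD by simp
          ultimately show False using j2 by simp
        qed
      qed
      then show "C \<in> {C. C \<subseteq> insert a (insert b S) \<and> card C = j}" using fC by simp
    qed
    have fU: "finite (insert a (insert b S))" using fS by simp
    have cU: "card (insert a (insert b S)) = j + 1" using fS aS bS ab cS j by auto
    have "card F \<le> card {C. C \<subseteq> insert a (insert b S) \<and> card C = j}"
      by (rule card_mono) (use fU sub in auto)
    also have "\<dots> = (j + 1) choose j" using n_subsets[OF fU, of j] cU by simp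
    also have "\<dots> = j + 1" by (simp add: binomial_Suc_n)
    finally show False using cF by simp
  qed
  show ?thesis using cS allS by blast
qed


lemma Inter_ins: "x \<in> X \<Longrightarrow> y \<in> X \<Longrightarrow> x \<noteq> y \<Longrightarrow> \<Inter>((\<lambda>z. insert z S) ` X) = S"
  by auto

lemma Union_ins: "S \<subseteq> K \<Longrightarrow> K - S \<noteq> {} \<Longrightarrow> \<Union>((\<lambda>z. insert z S) ` (K - S)) = K"
  by auto

lemma card_ge2_two: assumes "card X \<ge> 2" shows "\<exists>x y. x \<in> X \<and> y \<in> X \<and> x \<noteq> y"
proof -
  have "X \<noteq> {}" using assms by auto
  then obtain x where x: "x \<in> X" by blast
  have "finite X" using assms card.infinite by fastforce
  then have "card (X - {x}) \<ge> 1" using assms x by auto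
  then have "X - {x} \<noteq> {}" by (metis card.empty not_one_le_zero)
  then show ?thesis using x by blast
qed

lemma TS_count:
  assumes finV: "finite V" and j: "j \<ge> 1" and q: "q \<ge> j + 2"
  shows "card (cliques (cliques V E j) (TS_edge V E j) q)
         = ((q + j - 1) choose (j - 1)) * card (cliques V E (q + j - 1))"
proof -
  define \<Phi> :: "'a set \<times> 'a set \<Rightarrow> 'a set set"
    where "\<Phi> = (\<lambda>(K, S). (\<lambda>z. insert z S) ` (K - S))"
  define D where "D = Sigma (cliques V E (q + j - 1)) (\<lambda>K. {S. S \<subseteq> K \<and> card S = j - 1})"
  define T where "T = cliques (cliques V E j) (TS_edge V E j) q"
  have finCl: "finite (cliques V E k)" for k
    by (rule finite_subset[OF cliques_subset_Pow]) (simp add: finV)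
  have memD: "K \<in> cliques V E (q + j - 1) \<and> S \<subseteq> K \<and> card S = j - 1"
    if "(K, S) \<in> D" for K S using that by (simp add: D_def)
  have cKS: "card (K - S) = q" and fK: "finite K" and fS: "finite S"
    if "(K, S) \<in> D" for K S
  proof -
    have K: "K \<subseteq> V" "card K = q + j - 1" "S \<subseteq> K" "card S = j - 1"
      using memD[OF that] by (auto simp: cliques_def is_clique_def)
    show fK': "finite K" using K finV finite_subset by blast
    show "finite S" using K fK' finite_subset by blast
    have "card (K - S) = card K - card S" using card_Diff_subset \<open>finite S\<close> K(3) by blast
    then show "card (K - S) = q" using K j by simp
  qed
  have inj: "inj_on \<Phi> D"
  proof (rule inj_onI)
    fix p1 p2 assume p1: "p1 \<in> D" and p2: "p2 \<in> D" and eq: "\<Phi> p1 = \<Phi> p2"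
    obtain K1 S1 where P1: "p1 = (K1, S1)" by (cases p1)
    obtain K2 S2 where P2: "p2 = (K2, S2)" by (cases p2)
    have d1: "(K1, S1) \<in> D" and d2: "(K2, S2) \<in> D" using p1 p2 P1 P2 by auto
    have c1: "card (K1 - S1) \<ge> 2" and c2: "card (K2 - S2) \<ge> 2"
      using cKS[OF d1] cKS[OF d2] q by auto
    obtain x1 y1 where xy1: "x1 \<in> K1 - S1" "y1 \<in> K1 - S1" "x1 \<noteq> y1" using card_ge2_two[OF c1] by blast
    obtain x2 y2 where xy2: "x2 \<in> K2 - S2" "y2 \<in> K2 - S2" "x2 \<noteq> y2" using card_ge2_two[OF c2] by blast
    have e: "(\<lambda>z. insert z S1) ` (K1 - S1) = (\<lambda>z. insert z S2) ` (K2 - S2)"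
      using eq P1 P2 by (simp add: \<Phi>_def)
    have "S1 = S2" using Inter_ins[OF xy1, of S1] Inter_ins[OF xy2, of S2] e by simp
    moreover have "K1 = K2" using Union_ins[of S1 K1] Union_ins[of S2 K2] e memD[OF d1] memD[OF d2] xy1 xy2
      by (metis empty_iff)
    ultimately show "p1 = p2" using P1 P2 by simp
  qed
  have img1: "\<Phi> ` D \<subseteq> T"
  proof
    fix F assume "F \<in> \<Phi> ` D"
    then obtain K S where d: "(K, S) \<in> D" and F: "F = (\<lambda>z. insert z S) ` (K - S)"
      by (auto simp: \<Phi>_def)
    have K: "K \<subseteq> V" "card K = q + j - 1" "S \<subseteq> K" "card S = j - 1"
         "\<forall>u\<in>K. \<forall>v\<in>K. u \<noteq> v \<longrightarrow> E u v"
      using memD[OF d] by (auto simp: cliques_def is_clique_def)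
    have memj: "insert x S \<in> cliques V E j" if "x \<in> K - S" for x
    proof -
      have "card (insert x S) = j" using that fS[OF d] K(4) j by simp
      moreover have "insert x S \<subseteq> K" using that K(3) by blast
      ultimately show ?thesis using K unfolding cliques_def is_clique_def by blast
    qed
    have injS: "inj_on (\<lambda>z. insert z S) (K - S)"
      by (rule inj_onI) (metis DiffD2 insertE insertI1)
    have "card F = q" using F card_image[OF injS] cKS[OF d] by simp
    moreover have "F \<subseteq> cliques V E j" using F memj by blast
    moreover have "\<forall>A\<in>F. \<forall>B\<in>F. A \<noteq> B \<longrightarrow> TS_edge V E j A B"
    proof (intro ballI impI)
      fix A B assume "A \<in> F" "B \<in> F" "A \<noteq> B"
      then obtain x y where x: "x \<in> K - S" "A = insert x S" and y: "y \<in> K - S" "B = insert y S"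
        using F by blast
      have "x \<noteq> y" using x y \<open>A \<noteq> B\<close> by blast
      then have "A - B = {x}" "B - A = {y}" "E x y" using x y K(5) by auto
      then show "TS_edge V E j A B" unfolding TS_edge_def using memj x y by blast
    qed
    ultimately show "F \<in> T" unfolding T_def cliques_def is_clique_def by blast
  qed
  have img2: "T \<subseteq> \<Phi> ` D"
  proof
    fix F assume FT: "F \<in> T"
    have Fsub: "F \<subseteq> cliques V E j" and cF: "card F = q"
      and Fe: "\<forall>A\<in>F. \<forall>B\<in>F. A \<noteq> B \<longrightarrow> TS_edge V E j A B"
      using FT unfolding T_def cliques_def is_clique_def by auto
    have "0 < card F" using cF q by simp
    then have finF: "finite F" and Fne: "F \<noteq> {}" using card_gt_0_iff by blast+
    have Acl: "A \<subseteq> V \<and> finite A \<and> card A = j \<and> (\<forall>u\<in>A. \<forall>v\<in>A. u \<noteq> v \<longrightarrow> E u v)" if "A \<in> F" for A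
    proof -
      have "A \<in> cliques V E j" using Fsub that by blast
      then have "A \<subseteq> V \<and> card A = j \<and> (\<forall>u\<in>A. \<forall>v\<in>A. u \<noteq> v \<longrightarrow> E u v)"
        unfolding cliques_def is_clique_def by simp
      then show ?thesis using finV finite_subset by blast
    qed
    have inter: "card (A \<inter> B) = j - 1" if "A \<in> F" "B \<in> F" "A \<noteq> B" for A B
    proof -
      have "TS_edge V E j A B" using Fe that by blast
      then obtain u where "A - B = {u}" unfolding TS_edge_def by blast
      moreover have fA: "finite A" "card A = j" using Acl[OF that(1)] by auto
      moreover have "card (A - B) = card A - card (A \<inter> B)"
        using card_Diff_subset_Int[of A B] fA by simp
      moreover have "card (A \<inter> B) \<le> card A" using fA card_mono[of A "A \<inter> B"] by simp
      ultimately show ?thesis by simp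
    qed
    have cF2: "card F \<ge> j + 2" using cF q by simp
    have cards: "\<And>A. A \<in> F \<Longrightarrow> finite A \<and> card A = j" using Acl by blast
    obtain S where cS: "card S = j - 1" and SA: "\<forall>A\<in>F. S \<subseteq> A"
      using sunflower[OF finF cF2 j cards inter] by blast
    obtain A0 where A0: "A0 \<in> F" using Fne by blast
    have fS: "finite S" using finite_subset[of S A0] SA A0 cards[OF A0] by blast
    have shape: "\<exists>x. A = insert x S \<and> x \<notin> S" if "A \<in> F" for A
    proof -
      have "card (A - S) = card A - card S" using card_Diff_subset[OF fS] SA that by blast
      then have "card (A - S) = 1" using Acl[OF that] cS j by simp
      then obtain x where "A - S = {x}" by (auto simp: card_1_singleton_iff)
      then show ?thesis using SA that by blast
    qed
    define K where "K = \<Union>F"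
    have FPhi: "F = (\<lambda>z. insert z S) ` (K - S)"
    proof
      show "F \<subseteq> (\<lambda>z. insert z S) ` (K - S)"
      proof
        fix A assume "A \<in> F"
        then obtain x where "A = insert x S" "x \<notin> S" using shape by blast
        then show "A \<in> (\<lambda>z. insert z S) ` (K - S)" using \<open>A \<in> F\<close> K_def by blast
      qed
      show "(\<lambda>z. insert z S) ` (K - S) \<subseteq> F"
      proof
        fix B assume "B \<in> (\<lambda>z. insert z S) ` (K - S)"
        then obtain x where x: "x \<in> K - S" "B = insert x S" by blast
        then obtain A where "A \<in> F" "x \<in> A" using K_def by blast
        then obtain y where "A = insert y S" "y \<notin> S" using shape by blast
        then show "B \<in> F" using x \<open>A \<in> F\<close> \<open>x \<in> A\<close> by blast
      qed
    qed
    have KV: "K \<subseteq> V" using Acl K_def by blast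
    have fK: "finite K" using KV finV finite_subset by blast
    have SK: "S \<subseteq> K" using Fne SA K_def by blast
    have injS: "inj_on (\<lambda>z. insert z S) (K - S)"
      by (rule inj_onI) (metis DiffD2 insertE insertI1)
    have "card (K - S) = q" using card_image[OF injS] FPhi cF by simp
    moreover have "card (K - S) = card K - card S" using card_Diff_subset fS SK by blast
    moreover have "card S \<le> card K" using card_mono fK SK by blast
    ultimately have cK: "card K = q + j - 1" using cS j by simp
    have Kcl: "\<forall>u\<in>K. \<forall>v\<in>K. u \<noteq> v \<longrightarrow> E u v"
    proof (intro ballI impI)
      fix u v assume u: "u \<in> K" and v: "v \<in> K" and uv: "u \<noteq> v"
      obtain Au where Au: "Au \<in> F" "u \<in> Au" using u K_def by blast
      obtain Av where Av: "Av \<in> F" "v \<in> Av" using v K_def by blast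
      show "E u v"
      proof (cases "u \<in> S \<or> v \<in> S")
        case True
        show ?thesis
        proof (cases "u \<in> S")
          case True
          then have "u \<in> Av" using SA Av(1) by blast
          moreover have "\<forall>u\<in>Av. \<forall>v\<in>Av. u \<noteq> v \<longrightarrow> E u v" using Acl[OF Av(1)] by blast
          ultimately show ?thesis using Av(2) uv by blast
        next
          case False
          then have "v \<in> Au" using \<open>u \<in> S \<or> v \<in> S\<close> SA Au(1) by blast
          moreover have "\<forall>u\<in>Au. \<forall>v\<in>Au. u \<noteq> v \<longrightarrow> E u v" using Acl[OF Au(1)] by blast
          ultimately show ?thesis using Au(2) uv by blast
        qed
      next
        case False
        have Aue: "Au = insert u S" using shape[OF Au(1)] Au(2) False by blast
        have Ave: "Av = insert v S" using shape[OF Av(1)] Av(2) False by blast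
        have "Au \<noteq> Av" using Aue Ave False uv by blast
        then have "TS_edge V E j Au Av" using Fe Au Av by blast
        then obtain u' v' where "Au - Av = {u'}" "Av - Au = {v'}" "E u' v'"
          unfolding TS_edge_def by blast
        moreover have "Au - Av = {u}" "Av - Au = {v}" using Aue Ave False uv by auto
        ultimately show ?thesis by simp
      qed
    qed
    have "(K, S) \<in> D" unfolding D_def cliques_def is_clique_def using KV Kcl cK SK cS by simp
    then show "F \<in> \<Phi> ` D" using FPhi unfolding \<Phi>_def by force
  qed
  have bij: "bij_betw \<Phi> D T" using inj img1 img2 unfolding bij_betw_def by blast
  have "card T = card D" using bij_betw_same_card[OF bij] by simp
  also have "\<dots> = (\<Sum>K\<in>cliques V E (q + j - 1). card {S. S \<subseteq> K \<and> card S = j - 1})"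
    unfolding D_def
  proof (rule card_SigmaI)
    show "finite (cliques V E (q + j - 1))" by (rule finCl)
    show "\<forall>a\<in>cliques V E (q + j - 1). finite {S. S \<subseteq> a \<and> card S = j - 1}"
    proof
      fix a assume "a \<in> cliques V E (q + j - 1)"
      then have "a \<subseteq> V" unfolding cliques_def is_clique_def by simp
      then have "finite a" using finV finite_subset by blast
      show "finite {S. S \<subseteq> a \<and> card S = j - 1}"
        by (rule finite_subset[of _ "Pow a"]) (auto simp: \<open>finite a\<close>)
    qed
  qed
  also have "\<dots> = (\<Sum>K\<in>cliques V E (q + j - 1). (q + j - 1) choose (j - 1))"
  proof (rule sum.cong)
    fix K assume "K \<in> cliques V E (q + j - 1)"
    then have "finite K" "card K = q + j - 1" using finV finite_subset
      unfolding cliques_def is_clique_def by auto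
    then show "card {S. S \<subseteq> K \<and> card S = j - 1} = (q + j - 1) choose (j - 1)"
      using n_subsets by metis
  qed simp
  also have "\<dots> = ((q + j - 1) choose (j - 1)) * card (cliques V E (q + j - 1))" by simp
  finally show ?thesis unfolding T_def .
qed

theorem proposition3p10:
  fixes VH :: "'a set" and EH :: "'a \<Rightarrow> 'a \<Rightarrow> bool"
    and VG :: "'b set" and EG :: "'b \<Rightarrow> 'b \<Rightarrow> bool"
    and j q :: nat
  assumes "j \<ge> 2"
    and "simple_graph VH EH"
    and "simple_graph VG EG"
    and "graph_iso VG EG (TS_vertices VH EH j) (TS_edge VH EH j)"
    and "q = clique_number VG EG"
    and "q \<ge> j + 2"
  shows "card (cliques VG EG q) = ((q + j - 1) choose (j - 1)) * card (cliques VH EH (q + j - 1))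
         \<and> ((q + j - 1) choose (j - 1)) dvd card (cliques VG EG q)"
proof -
  have fH: "finite VH" using assms(2) unfolding simple_graph_def by blast
  have fG: "finite VG" using assms(3) unfolding simple_graph_def by blast
  have fT: "finite (TS_vertices VH EH j)" unfolding TS_vertices_def
    by (rule finite_subset[OF cliques_subset_Pow]) (simp add: fH)
  have "card (cliques VG EG q) = card (cliques (TS_vertices VH EH j) (TS_edge VH EH j) q)"
    by (rule iso_card_eq[OF assms(4) fG fT])
  also have "\<dots> = ((q + j - 1) choose (j - 1)) * card (cliques VH EH (q + j - 1))"
    unfolding TS_vertices_def by (rule TS_count) (use fH assms(1) assms(6) in auto)
  finally show ?thesis by simp
qed

end
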